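(* Let $T$ be a tree on $n\ge 3$ vertices. Then $$\frac{2}{n-1}\le \gamma(T)\le \frac{n}{2n-3}.$$ Equality holds in the lower bound if and only if $T$ is isomorphic to the path $P_n$, and equality holds in the upper bound if and only if $T$ is isomorphic to the star $S_n$.
   Context: For a finite simple undirected graph $G$ with $n$ vertices, let $\mathcal{F}=\{x\in\mathbb{R}^{V(G)} : \sum_{v} x_v = 0,\ \|x\|_\infty = 1\}$, for $x\in\mathcal{F}$ let $\gamma_x(G)=\max_{uv\in E(G)}|x_u-x_v|$, and $\gamma(G)=\min_{x\in\mathcal{F}}\gamma_x(G)$. The star $S_n$ is the tree on $n$ vertices with one vertex adjacent to all other $n-1$ vertices. *)

theory Defs
  imports Complex_Main
begin

definition simple_graph :: "'a set \<Rightarrow> 'a set set \<Rightarrow> bool" where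
  "simple_graph V E \<longleftrightarrow> finite V \<and>
     (\<forall>e\<in>E. \<exists>u v. e = {u, v} \<and> u \<noteq> v \<and> u \<in> V \<and> v \<in> V)"

definition connected_graph :: "'a set \<Rightarrow> 'a set set \<Rightarrow> bool" where
  "connected_graph V E \<longleftrightarrow>
     (\<forall>u\<in>V. \<forall>v\<in>V. (\<lambda>a b. {a, b} \<in> E)\<^sup>*\<^sup>* u v)"

definition has_cycle :: "'a set \<Rightarrow> 'a set set \<Rightarrow> bool" where
  "has_cycle V E \<longleftrightarrow> (\<exists>xs. length xs \<ge> 3 \<and> distinct xs \<and> set xs \<subseteq> V \<and>
     (\<forall>i. i + 1 < length xs \<longrightarrow> {xs ! i, xs ! (i + 1)} \<in> E) \<and>
     {last xs, hd xs} \<in> E)"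

definition is_tree :: "'a set \<Rightarrow> 'a set set \<Rightarrow> bool" where
  "is_tree V E \<longleftrightarrow> simple_graph V E \<and> V \<noteq> {} \<and> connected_graph V E \<and> \<not> has_cycle V E"

definition graph_iso :: "'a set \<Rightarrow> 'a set set \<Rightarrow> 'b set \<Rightarrow> 'b set set \<Rightarrow> bool" where
  "graph_iso V E W F \<longleftrightarrow> (\<exists>f. bij_betw f V W \<and>
     (\<forall>u\<in>V. \<forall>v\<in>V. {u, v} \<in> E \<longleftrightarrow> {f u, f v} \<in> F))"

definition path_edges :: "nat \<Rightarrow> nat set set" where
  "path_edges n = {{i, i + 1} | i. i + 1 < n}"

definition star_edges :: "nat \<Rightarrow> nat set set" where
  "star_edges n = {{0, i} | i. 0 < i \<and> i < n}"

text \<open>The feasible set F: vectors indexed by V (values outside V are irrelevant)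
  with zero sum and sup-norm 1.\<close>

definition feasible :: "'a set \<Rightarrow> ('a \<Rightarrow> real) set" where
  "feasible V = {x. (\<Sum>v\<in>V. x v) = 0 \<and> Max ((\<lambda>v. \<bar>x v\<bar>) ` V) = 1}"

definition gamma_x :: "'a set set \<Rightarrow> ('a \<Rightarrow> real) \<Rightarrow> real" where
  "gamma_x E x = Max {\<bar>x u - x v\<bar> | u v. {u, v} \<in> E}"

definition gamma :: "'a set \<Rightarrow> 'a set set \<Rightarrow> real" where
  "gamma V E = (INF x\<in>feasible V. gamma_x E x)"

end

theory Submission
  imports Defs
begin


definition adj :: "'a set set \<Rightarrow> 'a \<Rightarrow> 'a \<Rightarrow> bool" where
  "adj E a b \<longleftrightarrow> {a, b} \<in> E"

definition gd :: "'a set set \<Rightarrow> 'a \<Rightarrow> 'a \<Rightarrow> nat" where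
  "gd E u w = (LEAST k. (adj E ^^ k) u w)"

lemma edge_in:
  assumes "simple_graph V E" "{a, b} \<in> E"
  shows "a \<in> V" "b \<in> V" "a \<noteq> b"
  using assms unfolding simple_graph_def by (auto simp: doubleton_eq_iff)

lemma edge_sym: "{a, b} \<in> E \<Longrightarrow> {b, a} \<in> E"
  by (simp add: insert_commute)

lemma conn_walk:
  assumes "connected_graph V E" "u \<in> V" "w \<in> V"
  shows "\<exists>k. (adj E ^^ k) u w"
proof -
  have "(\<lambda>a b. {a, b} \<in> E)\<^sup>*\<^sup>* u w" using assms unfolding connected_graph_def by blast
  moreover have "adj E = (\<lambda>a b. {a, b} \<in> E)" by (auto simp: adj_def fun_eq_iff)
  ultimately show ?thesis by (metis rtranclp_imp_relpowp)
qed

lemma gd_walk: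
  assumes "connected_graph V E" "u \<in> V" "w \<in> V"
  shows "(adj E ^^ gd E u w) u w"
  unfolding gd_def using conn_walk[OF assms] by (rule LeastI_ex)

lemma gd_le: "(adj E ^^ k) u w \<Longrightarrow> gd E u w \<le> k"
  unfolding gd_def by (rule Least_le)

lemma gd_self: "gd E u u = 0"
  using gd_le[of 0 E u u] by simp

lemma gd_edge:
  assumes "simple_graph V E" "connected_graph V E" "u \<in> V" "{a, b} \<in> E"
  shows "gd E u b \<le> gd E u a + 1"
proof -
  have "a \<in> V" using edge_in[OF assms(1,4)] by simp
  have "(adj E ^^ gd E u a) u a" by (rule gd_walk[OF assms(2,3) \<open>a \<in> V\<close>])
  then have "(adj E ^^ Suc (gd E u a)) u b" using assms(4) by (auto intro: relpowp_Suc_I simp: adj_def)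
  then show ?thesis using gd_le by fastforce
qed

lemma gd_edge2:
  assumes "simple_graph V E" "connected_graph V E" "u \<in> V" "{a, b} \<in> E"
  shows "gd E u b \<le> gd E u a + 1 \<and> gd E u a \<le> gd E u b + 1"
  using gd_edge[OF assms] gd_edge[OF assms(1-3) edge_sym[OF assms(4)]] by simp

lemma gd_zero:
  assumes "connected_graph V E" "u \<in> V" "w \<in> V" "gd E u w = 0"
  shows "w = u"
  using gd_walk[OF assms(1-3)] assms(4) by simp

lemma gd_pred:
  assumes "simple_graph V E" "connected_graph V E" "u \<in> V" "w \<in> V" "gd E u w = Suc k"
  shows "\<exists>c\<in>V. {c, w} \<in> E \<and> gd E u c = k"
proof -
  have "(adj E ^^ Suc k) u w" using gd_walk[OF assms(2-4)] assms(5) by simp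
  then obtain c where c: "(adj E ^^ k) u c" "{c, w} \<in> E" by (auto elim: relpowp_Suc_E simp: adj_def)
  have cV: "c \<in> V" using edge_in[OF assms(1) c(2)] by simp
  have "gd E u c \<le> k" using gd_le[OF c(1)] .
  moreover have "gd E u w \<le> gd E u c + 1" by (rule gd_edge[OF assms(1-3) c(2)])
  ultimately show ?thesis using cV c(2) assms(5) by auto
qed

lemma gd_one:
  assumes "simple_graph V E" "connected_graph V E" "u \<in> V" "w \<in> V" "gd E u w = 1"
  shows "{u, w} \<in> E"
proof -
  obtain c where "c \<in> V" "{c, w} \<in> E" "gd E u c = 0" using gd_pred[OF assms(1-4)] assms(5) by auto
  then show ?thesis using gd_zero[OF assms(2,3)] by metis
qed

lemma gd_adj_le1:
  assumes "simple_graph V E" "connected_graph V E" "u \<in> V" "{u, w} \<in> E"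
  shows "gd E u w \<le> 1"
  using gd_edge[OF assms] gd_self[of E u] by simp

lemma shortest_path:
  assumes "simple_graph V E" "connected_graph V E" "u \<in> V"
  shows "w \<in> V \<Longrightarrow> gd E u w = k \<Longrightarrow> \<exists>p. p 0 = u \<and> p k = w \<and> (\<forall>i\<le>k. p i \<in> V \<and> gd E u (p i) = i)
     \<and> (\<forall>i<k. {p i, p (Suc i)} \<in> E)"
proof (induction k arbitrary: w)
  case 0
  then have "w = u" using gd_zero[OF assms(2,3)] by simp
  then show ?case using 0 by (intro exI[of _ "\<lambda>_. u"]) auto
next
  case (Suc k)
  obtain c where c: "c \<in> V" "{c, w} \<in> E" "gd E u c = k" using gd_pred[OF assms Suc(2,3)] by blast
  obtain p where p: "p 0 = u" "p k = c" "\<forall>i\<le>k. p i \<in> V \<and> gd E u (p i) = i" "\<forall>i<k. {p i, p (Suc i)} \<in> E"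
    using Suc.IH[OF c(1,3)] by blast
  show ?case
  proof (intro exI[of _ "p(Suc k := w)"] conjI allI impI)
    show "(p(Suc k := w)) 0 = u" using p by simp
    show "(p(Suc k := w)) (Suc k) = w" by simp
    fix i assume "i \<le> Suc k"
    then show "(p(Suc k := w)) i \<in> V"
      using p(3) Suc(2,3) by (cases "i = Suc k") auto
  next
    fix i assume "i \<le> Suc k"
    then show "gd E u ((p(Suc k := w)) i) = i"
      using p(3) Suc(2,3) by (cases "i = Suc k") auto
  next
    fix i assume "i < Suc k"
    then show "{(p(Suc k := w)) i, (p(Suc k := w)) (Suc i)} \<in> E"
      using p c by (cases "i = k") auto
  qed
qed



lemma sum_dc:
  fixes g :: "'a \<Rightarrow> nat"
  shows "finite V \<Longrightarrow> card V = n \<Longrightarrow> (\<forall>w\<in>V. g w > 0 \<longrightarrow> (\<exists>w'\<in>V. g w' = g w - 1)) \<Longrightarrow>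
     2 * sum g V \<le> n * (n - 1) \<and> (\<forall>w\<in>V. g w < n) \<and>
     (2 * sum g V = n * (n - 1) \<longrightarrow> bij_betw g V {0..<n})"
proof (induction n arbitrary: V)
  case 0
  then show ?case by (auto simp: bij_betw_def)
next
  case (Suc m)
  have ne: "V \<noteq> {}" using Suc.prems by auto
  have "Max (g ` V) \<in> g ` V" using Max_in[of "g ` V"] Suc.prems(1) ne by simp
  then obtain w where w: "w \<in> V" "g w = Max (g ` V)" by (metis imageE)
  have wmax: "\<forall>z\<in>V. g z \<le> g w" using w Suc.prems(1) by auto
  define V' where "V' = V - {w}"
  have fin': "finite V'" "card V' = m" using Suc.prems w by (auto simp: V'_def)
  have dc': "\<forall>z\<in>V'. g z > 0 \<longrightarrow> (\<exists>w'\<in>V'. g w' = g z - 1)"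
  proof (intro ballI impI)
    fix z assume z: "z \<in> V'" "g z > 0"
    then obtain w' where "w' \<in> V" "g w' = g z - 1" using Suc.prems(3) by (auto simp: V'_def)
    moreover have "g z \<le> g w" using wmax z by (auto simp: V'_def)
    ultimately show "\<exists>w'\<in>V'. g w' = g z - 1" using z by (intro bexI[of _ w']) (auto simp: V'_def)
  qed
  note IH = Suc.IH[OF fin' dc']
  have gw: "g w \<le> m"
  proof (cases "g w = 0")
    case False
    then obtain w' where "w' \<in> V" "g w' = g w - 1" using Suc.prems(3) w by auto
    moreover then have "w' \<in> V'" using False by (auto simp: V'_def)
    ultimately show ?thesis using IH by fastforce
  qed simp
  have sumV: "sum g V = sum g V' + g w" using Suc.prems(1) w
    by (simp add: V'_def sum.remove)
  have ar: "m * (m - 1) + 2 * m = Suc m * (Suc m - 1)" by (cases m) auto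
  have 1: "2 * sum g V \<le> Suc m * (Suc m - 1)" using IH gw sumV ar by linarith
  have 2: "\<forall>z\<in>V. g z < Suc m"
  proof
    fix z assume "z \<in> V"
    show "g z < Suc m"
    proof (cases "z = w")
      case False
      then have "z \<in> V'" using \<open>z \<in> V\<close> by (simp add: V'_def)
      then show ?thesis using IH by auto
    qed (use gw in simp)
  qed
  have 3: "bij_betw g V {0..<Suc m}" if eq: "2 * sum g V = Suc m * (Suc m - 1)"
  proof -
    have "2 * sum g V' = m * (m - 1)" "g w = m" using IH gw sumV ar eq by linarith+
    then have b: "bij_betw g V' {0..<m}" using IH by blast
    have "V = V' \<union> {w}" using w by (auto simp: V'_def)
    moreover have "w \<notin> V'" by (simp add: V'_def)
    moreover have "{0..<Suc m} = {0..<m} \<union> {g w}" using \<open>g w = m\<close> by auto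
    moreover have "g w \<notin> {0..<m}" using \<open>g w = m\<close> by simp
    ultimately show ?thesis using b notIn_Un_bij_betw3 by metis
  qed
  show ?case using 1 2 3 by blast
qed

lemma gx_finite:
  assumes "simple_graph V E"
  shows "finite {\<bar>x u - x v\<bar> | u v. {u, v} \<in> E}"
proof -
  have "{\<bar>x u - x v\<bar> | u v. {u, v} \<in> E} \<subseteq> (\<lambda>(u, v). \<bar>x u - x v\<bar>) ` (V \<times> V)"
    using edge_in[OF assms] by fastforce
  moreover have "finite V" using assms by (simp add: simple_graph_def)
  ultimately show ?thesis by (meson finite_SigmaI finite_imageI finite_subset)
qed

lemma gx_ge:
  assumes "simple_graph V E" "{a, b} \<in> E"
  shows "\<bar>x a - x b\<bar> \<le> gamma_x E x"
proof -
  have "\<bar>x a - x b\<bar> \<in> {\<bar>x u - x v\<bar> | u v. {u, v} \<in> E}"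
    using assms(2) by (intro CollectI exI conjI) (rule refl)
  then show ?thesis unfolding gamma_x_def by (intro Max_ge[OF gx_finite[OF assms(1)]])
qed

lemma gx_le:
  assumes "simple_graph V E" "E \<noteq> {}" "\<And>a b. {a, b} \<in> E \<Longrightarrow> \<bar>x a - x b\<bar> \<le> d"
  shows "gamma_x E x \<le> d"
proof -
  obtain e where "e \<in> E" using assms(2) by auto
  then obtain a b where ab: "{a, b} \<in> E" using assms(1) unfolding simple_graph_def by metis
  have "\<bar>x a - x b\<bar> \<in> {\<bar>x u - x v\<bar> | u v. {u, v} \<in> E}"
    using ab by (intro CollectI exI conjI) (rule refl)
  then have "{\<bar>x u - x v\<bar> | u v. {u, v} \<in> E} \<noteq> {}" by (metis empty_iff)
  then show ?thesis unfolding gamma_x_def using gx_finite[OF assms(1)]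
    by (intro Max.boundedI) (auto intro: assms(3))
qed

lemma walk_bound:
  assumes "\<And>a b. {a, b} \<in> E \<Longrightarrow> \<bar>x a - x b\<bar> \<le> d"
  shows "(adj E ^^ k) u w \<Longrightarrow> \<bar>x u - x w\<bar> \<le> real k * d"
proof (induction k arbitrary: w)
  case 0
  then show ?case by simp
next
  case (Suc k)
  from Suc.prems obtain c where c0: "(adj E ^^ k) u c" "adj E c w" by (rule relpowp_Suc_E)
  then have c: "(adj E ^^ k) u c" "{c, w} \<in> E" by (auto simp: adj_def)
  have "\<bar>x u - x c\<bar> \<le> real k * d" using Suc.IH[OF c(1)] .
  moreover have "\<bar>x c - x w\<bar> \<le> d" using assms c(2) by blast
  ultimately show ?case by (simp add: algebra_simps)
qed

lemma L1:
  assumes "simple_graph V E" "connected_graph V E" "V \<noteq> {}" "x \<in> feasible V"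
  shows "\<exists>u\<in>V. real (card V) \<le> gamma_x E x * real (\<Sum>w\<in>V. gd E u w)"
proof -
  have fin: "finite V" using assms(1) by (simp add: simple_graph_def)
  have s0: "(\<Sum>v\<in>V. x v) = 0" and m1: "Max ((\<lambda>v. \<bar>x v\<bar>) ` V) = 1" using assms(4) by (auto simp: feasible_def)
  obtain u where u: "u \<in> V" "\<bar>x u\<bar> = 1" using Max_in[of "(\<lambda>v. \<bar>x v\<bar>) ` V"] fin assms(3) m1 by auto
  let ?g = "gamma_x E x"
  have bd: "\<bar>x u - x w\<bar> \<le> real (gd E u w) * ?g" if "w \<in> V" for w
    using walk_bound[of E x ?g, OF gx_ge[OF assms(1)] gd_walk[OF assms(2) u(1) that]] by blast
  have eq1: "(\<Sum>w\<in>V. 1 - real (gd E u w) * ?g) = real (card V) - ?g * real (\<Sum>w\<in>V. gd E u w)"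
    by (simp add: sum_subtractf sum_distrib_left of_nat_sum mult.commute)
  have eq2: "(\<Sum>w\<in>V. -1 + real (gd E u w) * ?g) = - real (card V) + ?g * real (\<Sum>w\<in>V. gd E u w)"
    by (simp add: sum.distrib sum_subtractf sum_distrib_left of_nat_sum mult.commute)
  have "real (card V) \<le> ?g * real (\<Sum>w\<in>V. gd E u w)"
  proof (cases "x u = 1")
    case True
    have "(\<Sum>w\<in>V. 1 - real (gd E u w) * ?g) \<le> (\<Sum>w\<in>V. x w)"
    proof (rule sum_mono)
      fix w assume "w \<in> V"
      from bd[OF this] have "x u - x w \<le> real (gd E u w) * ?g" unfolding abs_le_iff by linarith
      then show "1 - real (gd E u w) * ?g \<le> x w" using True by linarith
    qed
    then show ?thesis using s0 eq1 by linarith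
  next
    case False
    then have "x u = -1" using u by linarith
    have "(\<Sum>w\<in>V. x w) \<le> (\<Sum>w\<in>V. -1 + real (gd E u w) * ?g)"
    proof (rule sum_mono)
      fix w assume "w \<in> V"
      from bd[OF this] have "x w - x u \<le> real (gd E u w) * ?g" unfolding abs_le_iff by linarith
      then show "x w \<le> -1 + real (gd E u w) * ?g" using \<open>x u = -1\<close> by linarith
    qed
    then show ?thesis using s0 eq2 by linarith
  qed
  then show ?thesis using u by auto
qed

lemma path_from_bij:
  assumes "simple_graph V E" "connected_graph V E" "u \<in> V" "bij_betw (gd E u) V {0..<card V}"
  shows "graph_iso V E {0..<card V} (path_edges (card V))"
  unfolding graph_iso_def
proof (intro exI[of _ "gd E u"] conjI ballI)
  show "bij_betw (gd E u) V {0..<card V}" by fact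
  fix a b assume ab: "a \<in> V" "b \<in> V"
  let ?f = "gd E u"
  have inj: "inj_on ?f V" using assms(4) by (simp add: bij_betw_def)
  have lt: "?f a < card V" "?f b < card V" using assms(4) ab by (auto dest: bij_betw_apply)
  show "{a, b} \<in> E \<longleftrightarrow> {?f a, ?f b} \<in> path_edges (card V)"
  proof
    assume e: "{a, b} \<in> E"
    have "a \<noteq> b" using edge_in[OF assms(1) e] by simp
    then have "?f a \<noteq> ?f b" using inj ab by (meson inj_on_eq_iff)
    moreover have "?f b \<le> ?f a + 1 \<and> ?f a \<le> ?f b + 1" using gd_edge2[OF assms(1-3) e] .
    ultimately have "?f b = ?f a + 1 \<or> ?f a = ?f b + 1" by linarith
    then show "{?f a, ?f b} \<in> path_edges (card V)"
    proof
      assume "?f b = ?f a + 1"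
      then show ?thesis using lt unfolding path_edges_def by auto
    next
      assume h: "?f a = ?f b + 1"
      then have "{?f a, ?f b} = {?f b, ?f b + 1}" by auto
      then show ?thesis using lt h unfolding path_edges_def by auto
    qed
  next
    assume "{?f a, ?f b} \<in> path_edges (card V)"
    then obtain i where i: "{?f a, ?f b} = {i, i + 1}" by (auto simp: path_edges_def)
    have key: "{p, q} \<in> E" if pq: "p \<in> V" "q \<in> V" "?f q = Suc (?f p)" for p q
    proof -
      obtain c where c: "c \<in> V" "{c, q} \<in> E" "?f c = ?f p" using gd_pred[OF assms(1-3) pq(2,3)] by blast
      then have "c = p" using inj pq by (meson inj_on_eq_iff)
      then show ?thesis using c by simp
    qed
    from i have "(?f a = i \<and> ?f b = i + 1) \<or> (?f a = i + 1 \<and> ?f b = i)" by (auto simp: doubleton_eq_iff)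
    then show "{a, b} \<in> E"
    proof
      assume "?f a = i \<and> ?f b = i + 1"
      then show ?thesis using key[OF ab] by simp
    next
      assume "?f a = i + 1 \<and> ?f b = i"
      then have "{b, a} \<in> E" using key[OF ab(2) ab(1)] by simp
      then show ?thesis by (simp add: insert_commute)
    qed
  qed
qed



lemma tree_facts:
  assumes "is_tree V E"
  shows "simple_graph V E" "connected_graph V E" "finite V" "V \<noteq> {}" "\<not> has_cycle V E"
  using assms by (auto simp: is_tree_def simple_graph_def)

lemma E_nonempty:
  assumes "simple_graph V E" "connected_graph V E" "u \<in> V" "w \<in> V" "u \<noteq> w"
  shows "E \<noteq> {}"
proof -
  have "gd E u w \<noteq> 0" using gd_zero[OF assms(2-4)] assms(5) by auto
  then obtain k where "gd E u w = Suc k" using not0_implies_Suc by blast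
  then show ?thesis using gd_pred[OF assms(1-4)] by auto
qed

lemma leaf_exists:
  assumes "is_tree V E" "card V \<ge> 2"
  shows "\<exists>v\<in>V. \<exists>w\<in>V. {v, w} \<in> E \<and> (\<forall>z\<in>V. {v, z} \<in> E \<longrightarrow> z = w)"
proof -
  note T = tree_facts[OF assms(1)]
  obtain u where u: "u \<in> V" using T(4) by blast
  have "Max (gd E u ` V) \<in> gd E u ` V" using Max_in T(3,4) by simp
  then obtain v where v: "v \<in> V" "gd E u v = Max (gd E u ` V)" by (metis imageE)
  have maxv: "\<forall>z\<in>V. gd E u z \<le> gd E u v" using v T(3) by auto
  obtain w0 where w0: "w0 \<in> V" "w0 \<noteq> u"
  proof -
    have "\<not> V \<subseteq> {u}"
    proof
      assume "V \<subseteq> {u}"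
      then have "card V \<le> card {u}" by (rule card_mono[rotated]) simp
      then show False using assms(2) by simp
    qed
    then show ?thesis using that by blast
  qed
  have "gd E u w0 \<noteq> 0" using gd_zero[OF T(2) u w0(1)] w0(2) by auto
  then have "gd E u v \<noteq> 0" using maxv w0(1) by fastforce
  then obtain a where a: "gd E u v = Suc a" using not0_implies_Suc by blast
  obtain c where c: "c \<in> V" "{c, v} \<in> E" "gd E u c = a" using gd_pred[OF T(1,2) u v(1) a] by blast
  have leaf: "z = c" if z: "z \<in> V" "{v, z} \<in> E" for z
  proof (rule ccontr)
    assume zc: "z \<noteq> c"
    define b where "b = gd E u z"
    have ab: "a \<le> b" "b \<le> Suc a" using gd_edge2[OF T(1,2) u z(2)] maxv z(1) a by (auto simp: b_def)
    have zv: "z \<noteq> v" using edge_in[OF T(1) z(2)] by simp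
    obtain p where p: "p 0 = u" "p a = c" "\<forall>i\<le>a. p i \<in> V \<and> gd E u (p i) = i" "\<forall>i<a. {p i, p (Suc i)} \<in> E"
      using shortest_path[OF T(1,2) u c(1) c(3)] by blast
    obtain q where q: "q 0 = u" "q b = z" "\<forall>i\<le>b. q i \<in> V \<and> gd E u (q i) = i" "\<forall>i<b. {q i, q (Suc i)} \<in> E"
      using shortest_path[OF T(1,2) u z(1) b_def[symmetric]] by blast
    define TT where "TT = {i. i \<le> a \<and> p i = q i}"
    have finT: "finite TT" unfolding TT_def by simp
    have "0 \<in> TT" unfolding TT_def using p q by simp
    define t where "t = Max TT"
    have tT: "t \<in> TT" unfolding t_def using finT \<open>0 \<in> TT\<close> Max_in by blast
    have tmax: "\<And>i. i \<in> TT \<Longrightarrow> i \<le> t" unfolding t_def using finT by simp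
    have ta: "t \<le> a" and pt: "p t = q t" using tT by (auto simp: TT_def)
    have tb: "t < b"
    proof (rule ccontr)
      assume "\<not> t < b"
      then have "a = t" "b = t" using ta ab by auto
      then show False using pt p(2) q(2) zc by simp
    qed
    define s where "s = a - t"
    have s: "a = t + s" using ta by (simp add: s_def)
    define r where "r = b - t - 1"
    have r: "b = t + Suc r" using tb by (simp add: r_def)
    define L where "L = s + r + 3"
    define h where "h i = (if i \<le> s then p (t + i) else if i = Suc s then v else q (t + s + r + 3 - i))" for i
    have h1: "h i = p (t + i)" if "i \<le> s" for i using that by (simp add: h_def)
    have h2: "h (Suc s) = v" by (simp add: h_def)
    have h3: "h (s + 2 + j) = q (t + r + 1 - j)" if "j \<le> r" for j using that by (simp add: h_def)
    have reg: "(i \<le> s) \<or> i = Suc s \<or> (\<exists>j\<le>r. i = s + 2 + j)" if "i < L" for i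
    proof (cases "i \<le> Suc s")
      case True
      then show ?thesis by (auto simp: le_Suc_eq)
    next
      case False
      then have "i - (s + 2) \<le> r" "i = s + 2 + (i - (s + 2))" using that unfolding L_def by linarith+
      then show ?thesis by blast
    qed
    have pin: "p i \<in> V" "gd E u (p i) = i" if "i \<le> a" for i using p(3) that by auto
    have qin: "q i \<in> V" "gd E u (q i) = i" if "i \<le> b" for i using q(3) that by auto
    have vgd: "gd E u v = Suc a" by (rule a)
    have inj: "inj_on h {0..<L}"
    proof (rule inj_onI)
      fix i j assume ij: "i \<in> {0..<L}" "j \<in> {0..<L}" "h i = h j"
      have cross13: False if c13: "i' \<le> s" "j' \<le> r" "p (t + i') = q (t + r + 1 - j')" for i' j'
      proof -
        have e1: "gd E u (p (t + i')) = t + i'" using pin(2)[of "t + i'"] c13(1) s by simp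
        have e2: "gd E u (q (t + r + 1 - j')) = t + r + 1 - j'" using qin(2)[of "t + r + 1 - j'"] r by simp
        have e: "t + i' = t + r + 1 - j'" using e1 e2 c13(3) by simp
        have "t + i' \<le> a" using c13(1) s by simp
        moreover have "p (t + i') = q (t + i')" using c13(3) e by simp
        ultimately have "t + i' \<in> TT" unfolding TT_def by simp
        then have "t + i' \<le> t" using tmax by blast
        then show False using e c13(2) by linarith
      qed
      have cross12: False if c12: "i' \<le> s" "p (t + i') = v" for i'
      proof -
        have e1: "gd E u (p (t + i')) = t + i'" using pin(2)[of "t + i'"] c12(1) s by simp
        then have "t + i' = Suc a" using c12(2) vgd by simp
        then show False using c12(1) s by linarith
      qed
      have cross23: False if c23: "j' \<le> r" "v = q (t + r + 1 - j')" for j'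
      proof -
        have e2: "gd E u (q (t + r + 1 - j')) = t + r + 1 - j'" using qin(2)[of "t + r + 1 - j'"] r by simp
        then have "t + r + 1 - j' = Suc a" using c23(2) vgd by simp
        then have "j' = 0" "b = Suc a" using ab r s by linarith+
        then have "q b = v" using c23(2) r by simp
        then show False using q(2) zv by simp
      qed
      have same1: "i' = j'" if "i' \<le> s" "j' \<le> s" "p (t + i') = p (t + j')" for i' j'
      proof -
        have e1: "gd E u (p (t + i')) = t + i'" using pin(2)[of "t + i'"] that(1) s by simp
        have e2: "gd E u (p (t + j')) = t + j'" using pin(2)[of "t + j'"] that(2) s by simp
        have "gd E u (p (t + i')) = gd E u (p (t + j'))" using that(3) by (rule arg_cong)
        then show ?thesis using e1 e2 by linarith
      qed
      have same3: "i' = j'" if "i' \<le> r" "j' \<le> r" "q (t + r + 1 - i') = q (t + r + 1 - j')" for i' j'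
      proof -
        have e1: "gd E u (q (t + r + 1 - i')) = t + r + 1 - i'" using qin(2)[of "t + r + 1 - i'"] r by simp
        have e2: "gd E u (q (t + r + 1 - j')) = t + r + 1 - j'" using qin(2)[of "t + r + 1 - j'"] r by simp
        have "gd E u (q (t + r + 1 - i')) = gd E u (q (t + r + 1 - j'))" using that(3) by (rule arg_cong)
        then have "t + r + 1 - i' = t + r + 1 - j'" using e1 e2 by linarith
        then show ?thesis using that by linarith
      qed
      have iL: "i < L" "j < L" using ij by auto
      show "i = j"
      proof -
        have hh: "h i = h j" by (rule ij(3))
        from reg[OF iL(1)] show ?thesis
        proof (elim disjE exE conjE)
          assume i1: "i \<le> s"
          from reg[OF iL(2)] show ?thesis
          proof (elim disjE exE conjE)
            assume "j \<le> s" then show ?thesis using same1[OF i1] hh h1 i1 by simp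
          next
            assume "j = Suc s" then show ?thesis using cross12[OF i1] hh h1 i1 h2 by simp
          next
            fix j' assume j3: "j' \<le> r" "j = s + 2 + j'"
            have "p (t + i) = q (t + r + 1 - j')" using hh h1[OF i1] h3[OF j3(1)] j3(2) by simp
            then show ?thesis using cross13[OF i1 j3(1)] by simp
          qed
        next
          assume i2: "i = Suc s"
          from reg[OF iL(2)] show ?thesis
          proof (elim disjE exE conjE)
            assume j1: "j \<le> s" then show ?thesis using cross12[OF j1] hh h1 i2 h2 by simp
          next
            assume "j = Suc s" then show ?thesis using i2 by simp
          next
            fix j' assume j3: "j' \<le> r" "j = s + 2 + j'"
            then show ?thesis using cross23[OF j3(1)] hh i2 h2 h3 by simp
          qed
        next
          fix i' assume i3: "i' \<le> r" "i = s + 2 + i'"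
          from reg[OF iL(2)] show ?thesis
          proof (elim disjE exE conjE)
            assume j1: "j \<le> s"
            have "p (t + j) = q (t + r + 1 - i')" using hh h1[OF j1] h3[OF i3(1)] i3(2) by simp
            then show ?thesis using cross13[OF j1 i3(1)] by simp
          next
            assume "j = Suc s" then show ?thesis using cross23[OF i3(1)] hh i3 h2 h3 by simp
          next
            fix j' assume j3: "j' \<le> r" "j = s + 2 + j'"
            then show ?thesis using same3[OF i3(1) j3(1)] hh i3 h3 by simp
          qed
        qed
      qed
    qed
    have cyc: "has_cycle V E"
      unfolding has_cycle_def
    proof (intro exI[of _ "map h [0..<L]"] conjI allI impI)
      show "3 \<le> length (map h [0..<L])" by (simp add: L_def)
      show "distinct (map h [0..<L])" using inj by (simp add: distinct_map)
      show "set (map h [0..<L]) \<subseteq> V"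
      proof
        fix y assume "y \<in> set (map h [0..<L])"
        then obtain i where i: "i < L" "y = h i" by auto
        from reg[OF i(1)] show "y \<in> V"
        proof (elim disjE exE conjE)
          assume "i \<le> s" then show ?thesis using h1 pin s i by simp
        next
          assume "i = Suc s" then show ?thesis using h2 v i by simp
        next
          fix j assume "j \<le> r" "i = s + 2 + j" then show ?thesis using h3 qin r i by simp
        qed
      qed
      fix i assume i: "i + 1 < length (map h [0..<L])"
      then have iL: "Suc i < L" by simp
      have "{h i, h (Suc i)} \<in> E"
      proof -
        have "i < s \<or> i = s \<or> i = Suc s \<or> (i - (s + 2) < r \<and> i = s + 2 + (i - (s + 2)))"
          using iL unfolding L_def by linarith
        then consider (A) "i < s" | (B) "i = s" | (C) "i = Suc s" | (D) j where "j < r" "i = s + 2 + j"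
          by blast
        then show ?thesis
        proof cases
          case A
          then show ?thesis using h1[of i] h1[of "Suc i"] p(4) s by simp
        next
          case B
          then show ?thesis using h1[of s] h2 p(2) c(2) s by simp
        next
          case C
          have "h (Suc (Suc s)) = q b" using h3[of 0] r by simp
          then show ?thesis using C h2 q(2) z(2) by simp
        next
          case D
          have e1: "h i = q (t + r + 1 - j)" using h3 D by simp
          have e2: "h (Suc i) = q (t + r - j)" using h3[of "Suc j"] D by simp
          have "{q (t + r - j), q (Suc (t + r - j))} \<in> E" using q(4) D r by simp
          moreover have "Suc (t + r - j) = t + r + 1 - j" using D by simp
          ultimately show ?thesis using e1 e2 by (simp add: insert_commute)
        qed
      qed
      then show "{map h [0..<L] ! i, map h [0..<L] ! (i + 1)} \<in> E" using iL by simp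
    next
      have "last (map h [0..<L]) = h (s + 2 + r)" by (simp add: L_def last_map)
      also have "\<dots> = q (t + 1)" using h3[of r] by simp
      finally have l: "last (map h [0..<L]) = q (t + 1)" .
      have hd: "hd (map h [0..<L]) = q t" using h1[of 0] pt by (simp add: L_def hd_map)
      have "{q t, q (Suc t)} \<in> E" using q(4) tb by simp
      then show "{last (map h [0..<L]), hd (map h [0..<L])} \<in> E" using l hd by (simp add: insert_commute)
    qed
    then show False using T(5) by simp
  qed
  have "{v, c} \<in> E" using c(2) by (rule edge_sym)
  then show ?thesis using v(1) c(1) leaf by blast
qed



lemma star_iso:
  assumes "is_tree V E" "w \<in> V" "\<forall>z\<in>V. z \<noteq> w \<longrightarrow> {w, z} \<in> E"
  shows "graph_iso V E {0..<card V} (star_edges (card V))"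
proof -
  note T = tree_facts[OF assms(1)]
  define m where "m = card (V - {w})"
  have "card V > 0" using T(3) assms(2) card_gt_0_iff by blast
  then have cV: "card V = Suc m" using T(3) assms(2) by (simp add: m_def)
  obtain h where h: "bij_betw h {1..m} (V - {w})" using ex_bij_betw_nat_finite_1[of "V - {w}"] T(3) m_def by auto
  define g where "g = inv_into {1..m} h"
  have g: "bij_betw g (V - {w}) {1..m}" unfolding g_def by (rule bij_betw_inv_into[OF h])
  define f where "f z = (if z = w then 0 else g z)" for z
  have "bij_betw f (V - {w}) {1..m}" using g by (rule bij_betw_cong[THEN iffD1, rotated]) (simp add: f_def)
  moreover have "w \<notin> V - {w}" by simp
  moreover have "f w \<notin> {1..m}" by (simp add: f_def)
  ultimately have "bij_betw f ((V - {w}) \<union> {w}) ({1..m} \<union> {f w})" using notIn_Un_bij_betw3 by metis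
  moreover have "(V - {w}) \<union> {w} = V" using assms(2) by auto
  moreover have "{1..m} \<union> {f w} = {0..<card V}" using cV by (auto simp: f_def)
  ultimately have bij: "bij_betw f V {0..<card V}" by simp
  have f0: "f z = 0 \<longleftrightarrow> z = w" if "z \<in> V" for z
  proof -
    have "z \<noteq> w \<Longrightarrow> g z \<in> {1..m}" using g that by (auto dest: bij_betw_apply)
    then show ?thesis by (auto simp: f_def)
  qed
  have flt: "f z < card V" if "z \<in> V" for z using bij that by (auto dest: bij_betw_apply)
  show ?thesis unfolding graph_iso_def
  proof (intro exI[of _ f] conjI ballI)
    show "bij_betw f V {0..<card V}" by (rule bij)
    fix a b assume ab: "a \<in> V" "b \<in> V"
    have R: "{f a, f b} \<in> star_edges (card V) \<longleftrightarrow> (a = w \<and> b \<noteq> w) \<or> (b = w \<and> a \<noteq> w)"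
    proof
      assume "{f a, f b} \<in> star_edges (card V)"
      then obtain i where i: "{f a, f b} = {0, i}" "0 < i" by (auto simp: star_edges_def)
      then have "(f a = 0 \<and> f b = i) \<or> (f a = i \<and> f b = 0)" by (auto simp: doubleton_eq_iff)
      then show "(a = w \<and> b \<noteq> w) \<or> (b = w \<and> a \<noteq> w)" using f0[OF ab(1)] f0[OF ab(2)] i(2) by auto
    next
      assume "(a = w \<and> b \<noteq> w) \<or> (b = w \<and> a \<noteq> w)"
      then show "{f a, f b} \<in> star_edges (card V)"
      proof
        assume h: "a = w \<and> b \<noteq> w"
        then have "f a = 0" "0 < f b" using f0 ab by auto
        then show ?thesis using flt[OF ab(2)] unfolding star_edges_def by auto
      next
        assume h: "b = w \<and> a \<noteq> w"
        then have "f b = 0" "0 < f a" using f0 ab by auto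
        then have "{f a, f b} = {0, f a}" by auto
        then show ?thesis using flt[OF ab(1)] \<open>0 < f a\<close> unfolding star_edges_def by auto
      qed
    qed
    have L: "{a, b} \<in> E \<longleftrightarrow> (a = w \<and> b \<noteq> w) \<or> (b = w \<and> a \<noteq> w)"
    proof
      assume e: "{a, b} \<in> E"
      have "a \<noteq> b" using edge_in[OF T(1) e] by simp
      moreover have "\<not> (a \<noteq> w \<and> b \<noteq> w)"
      proof
        assume nw: "a \<noteq> w \<and> b \<noteq> w"
        have "{w, a} \<in> E" "{w, b} \<in> E" using assms(3) ab nw by auto
        have "has_cycle V E" unfolding has_cycle_def
        proof (intro exI[of _ "[a, b, w]"] conjI allI impI)
          show "3 \<le> length [a, b, w]" by simp
          show "distinct [a, b, w]" using nw \<open>a \<noteq> b\<close> by auto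
          show "set [a, b, w] \<subseteq> V" using ab assms(2) by auto
          show "{last [a, b, w], hd [a, b, w]} \<in> E" using \<open>{w, a} \<in> E\<close> by simp
          fix i assume "i + 1 < length [a, b, w]"
          then have "i = 0 \<or> i = 1" by auto
          then show "{[a, b, w] ! i, [a, b, w] ! (i + 1)} \<in> E"
            using e \<open>{w, b} \<in> E\<close> by (auto simp: insert_commute)
        qed
        then show False using T(5) by simp
      qed
      ultimately show "(a = w \<and> b \<noteq> w) \<or> (b = w \<and> a \<noteq> w)" by blast
    next
      assume "(a = w \<and> b \<noteq> w) \<or> (b = w \<and> a \<noteq> w)"
      then show "{a, b} \<in> E"
      proof
        assume "a = w \<and> b \<noteq> w" then show ?thesis using assms(3) ab by auto
      next
        assume "b = w \<and> a \<noteq> w"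
        then have "{b, a} \<in> E" using assms(3) ab by auto
        then show ?thesis by (rule edge_sym)
      qed
    qed
    show "{a, b} \<in> E \<longleftrightarrow> {f a, f b} \<in> star_edges (card V)" using L R by simp
  qed
qed

lemma star_D_bound:
  assumes "simple_graph V E" "connected_graph V E" "c \<in> V" "\<forall>z\<in>V. z \<noteq> c \<longrightarrow> {c, z} \<in> E"
    "u \<in> V" "card V \<ge> 3"
  shows "(\<Sum>w\<in>V. gd E u w) \<le> 2 * card V - 3"
proof -
  have fin: "finite V" using assms(1) by (simp add: simple_graph_def)
  have s1: "(\<Sum>w\<in>V. gd E u w) = gd E u u + (\<Sum>w\<in>V - {u}. gd E u w)"
    using fin assms(5) by (simp add: sum.remove)
  show ?thesis
  proof (cases "u = c")
    case True
    have "(\<Sum>w\<in>V - {u}. gd E u w) \<le> card (V - {u}) * 1"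
      using sum_bounded_above[of "V - {u}" "gd E u" 1] gd_adj_le1[OF assms(1,2,5)] assms(4) True by auto
    then show ?thesis using s1 gd_self[of E u] fin assms(5,6) by (simp add: card_Diff_singleton)
  next
    case False
    have cu: "c \<in> V - {u}" using assms(3) False by auto
    have s2: "(\<Sum>w\<in>V - {u}. gd E u w) = gd E u c + (\<Sum>w\<in>V - {u} - {c}. gd E u w)"
      using fin cu by (simp add: sum.remove)
    have uc: "{u, c} \<in> E" using assms(4,5) False by (auto intro: edge_sym)
    have g1: "gd E u c \<le> 1" by (rule gd_adj_le1[OF assms(1,2,5) uc])
    have g2: "gd E u z \<le> 2" if "z \<in> V - {u} - {c}" for z
    proof -
      have "{c, z} \<in> E" using assms(4) that by auto
      then have "gd E u z \<le> gd E u c + 1" by (rule gd_edge[OF assms(1,2,5)])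
      then show ?thesis using g1 by simp
    qed
    have "(\<Sum>w\<in>V - {u} - {c}. gd E u w) \<le> card (V - {u} - {c}) * 2"
      using sum_bounded_above[of "V - {u} - {c}" "gd E u" 2] g2 by auto
    moreover have "card (V - {u} - {c}) = card V - 2" using fin cu assms(5) by (simp add: card_Diff_singleton)
    ultimately show ?thesis using s1 s2 g1 gd_self[of E u] assms(6) by simp
  qed
qed



lemma two_elems:
  assumes "finite V" "card V \<ge> 2"
  shows "\<exists>a\<in>V. \<exists>b\<in>V. a \<noteq> b"
proof -
  obtain u where u: "u \<in> V" using assms by fastforce
  have "\<not> V \<subseteq> {u}"
  proof
    assume "V \<subseteq> {u}"
    then have "card V \<le> card {u}" by (rule card_mono[rotated]) simp
    then show False using assms(2) by simp
  qed
  then show ?thesis using u by blast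
qed

lemma max_lip: "\<bar>max (\<alpha>::real) c - max \<beta> c\<bar> \<le> \<bar>\<alpha> - \<beta>\<bar>"
  by (auto simp: max_def abs_le_iff)

lemma upper_constr:
  assumes "is_tree V E" "card V \<ge> 3" "v \<in> V" "w \<in> V" "{v, w} \<in> E" "\<forall>z\<in>V. {v, z} \<in> E \<longrightarrow> z = w"
  shows "\<exists>x\<in>feasible V. gamma_x E x \<le> real (card V) / (2 * real (card V) - 3) \<and>
           ((\<exists>z\<in>V. gd E v z \<ge> 3) \<longrightarrow> gamma_x E x < real (card V) / (2 * real (card V) - 3))"
proof -
  note T = tree_facts[OF assms(1)]
  define n where "n = card V"
  define nr where "nr = real n"
  have n3: "nr \<ge> 3" using assms(2) by (simp add: nr_def n_def)
  define d0 where "d0 = nr / (2 * nr - 3)"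
  have d0pos: "d0 > 0" using n3 by (simp add: d0_def)
  have d0le: "d0 \<le> 1" using n3 by (simp add: d0_def)
  have d0eq: "d0 * (2 * nr - 3) = nr" using n3 by (simp add: d0_def)
  define F where "F d = (\<Sum>z\<in>V. max (1 - d * real (gd E v z)) (-1))" for d
  have vw: "v \<noteq> w" using edge_in[OF T(1) assms(5)] by simp
  have gvw: "gd E v w = 1"
  proof -
    have "gd E v w \<le> 1" by (rule gd_adj_le1[OF T(1,2) assms(3,5)])
    moreover have "gd E v w \<noteq> 0" using gd_zero[OF T(2) assms(3,4)] vw by auto
    ultimately show ?thesis by simp
  qed
  define R where "R = V - {v} - {w}"
  have Rg: "gd E v z \<ge> 2" if "z \<in> R" for z
  proof -
    have z: "z \<in> V" "z \<noteq> v" "z \<noteq> w" using that by (auto simp: R_def)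
    have "gd E v z \<noteq> 0" using gd_zero[OF T(2) assms(3) z(1)] z(2) by auto
    moreover have "gd E v z \<noteq> 1" using gd_one[OF T(1,2) assms(3) z(1)] assms(6) z by auto
    ultimately show ?thesis by simp
  qed
  have cardR: "card R = n - 2" using T(3) assms(3,4) vw by (simp add: R_def n_def card_Diff_singleton)
  have Fsplit: "F d = max (1 - d * real (gd E v v)) (-1) + max (1 - d * real (gd E v w)) (-1)
     + (\<Sum>z\<in>R. max (1 - d * real (gd E v z)) (-1))" for d
  proof -
    have "F d = max (1 - d * real (gd E v v)) (-1) + (\<Sum>z\<in>V - {v}. max (1 - d * real (gd E v z)) (-1))"
      unfolding F_def using T(3) assms(3) by (simp add: sum.remove)
    also have "(\<Sum>z\<in>V - {v}. max (1 - d * real (gd E v z)) (-1)) =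
        max (1 - d * real (gd E v w)) (-1) + (\<Sum>z\<in>R. max (1 - d * real (gd E v z)) (-1))"
    proof -
      have "w \<in> V - {v}" using assms(4) vw by simp
      then show ?thesis unfolding R_def using T(3) by (simp add: sum.remove)
    qed
    finally show ?thesis by simp
  qed
  have termR: "max (1 - d0 * real (gd E v z)) (-1) \<le> 1 - 2 * d0" if "z \<in> R" for z
  proof -
    have "d0 * 2 \<le> d0 * real (gd E v z)" using Rg[OF that] d0pos by simp
    then show ?thesis using d0le by simp
  qed
  have sumR: "(\<Sum>z\<in>R. max (1 - d0 * real (gd E v z)) (-1)) \<le> real (card R) * (1 - 2 * d0)"
    using sum_bounded_above[of R "\<lambda>z. max (1 - d0 * real (gd E v z)) (-1)" "1 - 2 * d0"] termR by auto
  have cardRr: "real (card R) = nr - 2" using cardR n3 by (simp add: nr_def)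
  have F0: "F d0 \<le> 0"
  proof -
    have "F d0 \<le> 1 + (1 - d0) + (nr - 2) * (1 - 2 * d0)"
      using Fsplit[of d0] sumR gvw d0le cardRr by (simp add: gd_self)
    also have "\<dots> = nr - d0 * (2 * nr - 3)" by (simp add: algebra_simps)
    finally show ?thesis using d0eq by simp
  qed
  have Fstrict: "F d0 < 0" if ex: "\<exists>z\<in>V. gd E v z \<ge> 3"
  proof -
    obtain z0 where z0: "z0 \<in> V" "gd E v z0 \<ge> 3" using ex by blast
    obtain p where p: "p 0 = v" "p (gd E v z0) = z0" "\<forall>i\<le>gd E v z0. p i \<in> V \<and> gd E v (p i) = i"
      using shortest_path[OF T(1,2) assms(3) z0(1) refl] by blast
    have pg: "gd E v (p i) = i" "p i \<in> V" if "i \<le> 3" for i using p(3) z0(2) that by auto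
    have "p 0 \<noteq> p 1" "p 0 \<noteq> p 2" "p 0 \<noteq> p 3" "p 1 \<noteq> p 2" "p 1 \<noteq> p 3" "p 2 \<noteq> p 3"
    proof -
      have inj: "i = j" if "i \<le> 3" "j \<le> 3" "p i = p j" for i j
        using pg(1)[OF that(1)] pg(1)[OF that(2)] that(3) by metis
      show "p 0 \<noteq> p 1" "p 0 \<noteq> p 2" "p 0 \<noteq> p 3" "p 1 \<noteq> p 2" "p 1 \<noteq> p 3" "p 2 \<noteq> p 3"
        using inj[of 0 1] inj[of 0 2] inj[of 0 3] inj[of 1 2] inj[of 1 3] inj[of 2 3] by auto
    qed
    then have "card {p 0, p 1, p 2, p 3} = 4" by simp
    moreover have "{p 0, p 1, p 2, p 3} \<subseteq> V" using pg by auto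
    ultimately have "4 \<le> n" unfolding n_def using T(3) by (metis card_mono)
    then have n4: "nr \<ge> 4" by (simp add: nr_def)
    have d0lt: "d0 < 1" using n4 by (simp add: d0_def)
    have z0R: "z0 \<in> R" using z0 gvw gd_self[of E v] unfolding R_def by auto
    have lt: "max (1 - d0 * real (gd E v z0)) (-1) < 1 - 2 * d0"
    proof -
      have "d0 * 3 \<le> d0 * real (gd E v z0)" using z0(2) d0pos by simp
      then show ?thesis using d0lt d0pos by simp
    qed
    have "(\<Sum>z\<in>R. max (1 - d0 * real (gd E v z)) (-1)) < (\<Sum>z\<in>R. 1 - 2 * d0)"
      using T(3) termR lt z0R by (intro sum_strict_mono_ex1) (auto simp: R_def)
    then have sR: "(\<Sum>z\<in>R. max (1 - d0 * real (gd E v z)) (-1)) < real (card R) * (1 - 2 * d0)" by simp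
    have "F d0 < 1 + (1 - d0) + (nr - 2) * (1 - 2 * d0)"
      using Fsplit[of d0] sR gvw d0le cardRr by (simp add: gd_self)
    also have "\<dots> = nr - d0 * (2 * nr - 3)" by (simp add: algebra_simps)
    finally show ?thesis using d0eq by simp
  qed
  have Fz: "F 0 = nr" unfolding F_def nr_def n_def by simp
  have cont: "continuous_on {0..d0} F" unfolding F_def by (intro continuous_intros)
  obtain d where d: "0 \<le> d" "d \<le> d0" "F d = 0"
    using IVT2'[of F d0 0 0, OF F0 _ _ cont] Fz n3 d0pos by auto
  define x where "x z = max (1 - d * real (gd E v z)) (-1)" for z
  have xle: "\<bar>x z\<bar> \<le> 1" for z
  proof -
    have "0 \<le> d * real (gd E v z)" using d(1) by simp
    then show ?thesis by (simp add: x_def abs_le_iff)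
  qed
  have xv: "x v = 1" by (simp add: x_def gd_self)
  have feas: "x \<in> feasible V"
    unfolding feasible_def
  proof (intro CollectI conjI)
    show "(\<Sum>z\<in>V. x z) = 0" using d(3) by (simp add: F_def x_def)
    have "1 \<in> (\<lambda>z. \<bar>x z\<bar>) ` V" proof (rule image_eqI[of _ _ v])
      show "1 = \<bar>x v\<bar>" using xv by simp
    qed (rule assms(3))
    then show "Max ((\<lambda>z. \<bar>x z\<bar>) ` V) = 1"
      using T(3) xle by (intro Max_eqI) auto
  qed
  have gx: "gamma_x E x \<le> d"
  proof (rule gx_le[OF T(1)])
    show "E \<noteq> {}" using assms(5) by auto
    fix a b assume e: "{a, b} \<in> E"
    have g: "gd E v b \<le> gd E v a + 1 \<and> gd E v a \<le> gd E v b + 1" by (rule gd_edge2[OF T(1,2) assms(3) e])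
    have "\<bar>real (gd E v a) - real (gd E v b)\<bar> \<le> 1" using g by linarith
    then have "d * \<bar>real (gd E v a) - real (gd E v b)\<bar> \<le> d * 1" using d(1) by (intro mult_left_mono) auto
    moreover have "\<bar>(1 - d * real (gd E v a)) - (1 - d * real (gd E v b))\<bar> = d * \<bar>real (gd E v a) - real (gd E v b)\<bar>"
    proof -
      have "(1 - d * real (gd E v a)) - (1 - d * real (gd E v b)) = d * (real (gd E v b) - real (gd E v a))"
        by (simp add: algebra_simps)
      then show ?thesis using d(1) by (simp add: abs_mult abs_minus_commute)
    qed
    ultimately show "\<bar>x a - x b\<bar> \<le> d" unfolding x_def using max_lip[of "1 - d * real (gd E v a)" "-1" "1 - d * real (gd E v b)"]
      by linarith
  qed
  show ?thesis
  proof (intro bexI[OF _ feas] conjI impI)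
    show "gamma_x E x \<le> real (card V) / (2 * real (card V) - 3)" using gx d(2) by (simp add: d0_def nr_def n_def)
  next
    assume "\<exists>z\<in>V. 3 \<le> gd E v z"
    then have "F d0 < 0" by (rule Fstrict)
    then have "d \<noteq> d0" using d(3) by auto
    then show "gamma_x E x < real (card V) / (2 * real (card V) - 3)" using gx d(2) by (simp add: d0_def nr_def n_def)
  qed
qed

lemma gauss_real: "2 * (\<Sum>i\<in>{0..<n}. real i) = real n * (real n - 1)"
  by (induction n) (auto simp: algebra_simps)

lemma path_constr:
  assumes "simple_graph V E" "connected_graph V E" "card V \<ge> 3"
    "graph_iso V E {0..<card V} (path_edges (card V))"
  shows "\<exists>x\<in>feasible V. gamma_x E x \<le> 2 / (real (card V) - 1)"
proof -
  have fin: "finite V" using assms(1) by (simp add: simple_graph_def)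
  obtain f where bij: "bij_betw f V {0..<card V}" and fe: "\<forall>u\<in>V. \<forall>v\<in>V. {u, v} \<in> E \<longleftrightarrow> {f u, f v} \<in> path_edges (card V)"
    using assms(4) unfolding graph_iso_def by blast
  define nr where "nr = real (card V)"
  have n3: "nr \<ge> 3" using assms(3) by (simp add: nr_def)
  define x where "x z = 1 - 2 * real (f z) / (nr - 1)" for z
  have fl: "f z < card V" if "z \<in> V" for z using bij that by (auto dest: bij_betw_apply)
  have S: "(\<Sum>z\<in>V. real (f z)) = (\<Sum>i\<in>{0..<card V}. real i)"
    using sum.reindex_bij_betw[OF bij, of real] by simp
  have S2: "2 * (\<Sum>z\<in>V. real (f z)) = nr * (nr - 1)" using S gauss_real[of "card V"] by (simp add: nr_def)
  have sumx: "(\<Sum>z\<in>V. x z) = 0"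
  proof -
    have "(\<Sum>z\<in>V. x z) = nr - (2 * (\<Sum>z\<in>V. real (f z))) / (nr - 1)"
      unfolding x_def by (simp add: sum_subtractf sum_divide_distrib[symmetric] sum_distrib_left nr_def)
    also have "\<dots> = 0" using S2 n3 by simp
    finally show ?thesis .
  qed
  have xle: "\<bar>x z\<bar> \<le> 1" if "z \<in> V" for z
  proof -
    have "real (f z) \<le> nr - 1" using fl[OF that] by (simp add: nr_def)
    then have "2 * real (f z) / (nr - 1) \<le> 2" using n3 by (simp add: divide_le_eq)
    moreover have "0 \<le> 2 * real (f z) / (nr - 1)" using n3 by simp
    ultimately show ?thesis unfolding x_def by (simp add: abs_le_iff)
  qed
  obtain z0 where z0: "z0 \<in> V" "f z0 = 0"
  proof -
    have "0 \<in> f ` V" using bij assms(3) by (simp add: bij_betw_def)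
    then show ?thesis using that by (metis imageE)
  qed
  have feas: "x \<in> feasible V"
    unfolding feasible_def
  proof (intro CollectI conjI)
    show "(\<Sum>z\<in>V. x z) = 0" by (rule sumx)
    have "\<bar>x z0\<bar> = 1" using z0 by (simp add: x_def)
    then show "Max ((\<lambda>z. \<bar>x z\<bar>) ` V) = 1"
      using fin xle z0 by (intro Max_eqI) auto
  qed
  obtain a b where ab: "a \<in> V" "b \<in> V" "a \<noteq> b" using two_elems[OF fin] assms(3) by fastforce
  have gx: "gamma_x E x \<le> 2 / (nr - 1)"
  proof (rule gx_le[OF assms(1) E_nonempty[OF assms(1,2) ab]])
    fix a b assume e: "{a, b} \<in> E"
    have abV: "a \<in> V" "b \<in> V" using edge_in[OF assms(1) e] by auto
    then have "{f a, f b} \<in> path_edges (card V)" using fe e by blast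
    then obtain i where "{f a, f b} = {i, i + 1}" by (auto simp: path_edges_def)
    then have "(f a = i \<and> f b = i + 1) \<or> (f a = i + 1 \<and> f b = i)" by (auto simp: doubleton_eq_iff)
    then have "\<bar>real (f a) - real (f b)\<bar> = 1" by auto
    then have h1: "\<bar>real (f b) - real (f a)\<bar> = 1" by (simp add: abs_minus_commute)
    have xab: "x a - x b = 2 * (real (f b) - real (f a)) / (nr - 1)"
      unfolding x_def by (simp add: diff_divide_distrib right_diff_distrib)
    have "\<bar>nr - 1\<bar> = nr - 1" using n3 by simp
    then have "\<bar>x a - x b\<bar> = 2 / (nr - 1)"
      unfolding xab abs_divide abs_mult h1 by simp
    then show "\<bar>x a - x b\<bar> \<le> 2 / (nr - 1)" by simp
  qed
  show ?thesis using feas gx by (auto simp: nr_def)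
qed



lemma lb_aux:
  fixes nr g D B :: real
  assumes "0 < nr" "nr \<le> g * D" "0 \<le> D" "D \<le> B" "0 < B"
  shows "nr / B \<le> g"
proof -
  have "g \<ge> 0"
  proof (rule ccontr)
    assume "\<not> g \<ge> 0"
    then have "g * D \<le> 0" using assms(3) by (simp add: mult_nonpos_nonneg)
    then show False using assms(1,2) by linarith
  qed
  then have "g * D \<le> g * B" using assms(4) by (simp add: mult_left_mono)
  then have "nr \<le> g * B" using assms(2) by linarith
  then show ?thesis using assms(5) by (simp add: divide_le_eq mult.commute)
qed

lemma dist_sum_bound:
  assumes "simple_graph V E" "connected_graph V E" "u \<in> V"
  shows "2 * (\<Sum>w\<in>V. gd E u w) \<le> card V * (card V - 1) \<and>
    (2 * (\<Sum>w\<in>V. gd E u w) = card V * (card V - 1) \<longrightarrow> bij_betw (gd E u) V {0..<card V})"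
proof -
  have fin: "finite V" using assms(1) by (simp add: simple_graph_def)
  have dc: "\<forall>w\<in>V. gd E u w > 0 \<longrightarrow> (\<exists>w'\<in>V. gd E u w' = gd E u w - 1)"
  proof (intro ballI impI)
    fix w assume w: "w \<in> V" "gd E u w > 0"
    then obtain k where k: "gd E u w = Suc k" using not0_implies_Suc by blast
    then obtain c where "c \<in> V" "gd E u c = k" using gd_pred[OF assms w(1) k] by blast
    then show "\<exists>w'\<in>V. gd E u w' = gd E u w - 1" using k by auto
  qed
  show ?thesis using sum_dc[OF fin refl dc] by blast
qed

theorem main_thm:
  fixes V :: "'a set" and E :: "'a set set"
  assumes "is_tree V E" and "card V \<ge> 3"
  shows "2 / (real (card V) - 1) \<le> gamma V E \<and>
         gamma V E \<le> real (card V) / (2 * real (card V) - 3) \<and>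
         (gamma V E = 2 / (real (card V) - 1) \<longleftrightarrow>
            graph_iso V E {0..<card V} (path_edges (card V))) \<and>
         (gamma V E = real (card V) / (2 * real (card V) - 3) \<longleftrightarrow>
            graph_iso V E {0..<card V} (star_edges (card V)))"
proof -
  note T = tree_facts[OF assms(1)]
  define n where "n = card V"
  define nr where "nr = real n"
  have n3: "nr \<ge> 3" using assms(2) by (simp add: nr_def n_def)
  obtain v w where vw: "v \<in> V" "w \<in> V" "{v, w} \<in> E" "\<forall>z\<in>V. {v, z} \<in> E \<longrightarrow> z = w"
  proof -
    have "card V \<ge> 2" using assms(2) by simp
    from leaf_exists[OF assms(1) this] show ?thesis using that by blast
  qed
  obtain x0 where x0: "x0 \<in> feasible V" "gamma_x E x0 \<le> nr / (2 * nr - 3)"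
    "(\<exists>z\<in>V. gd E v z \<ge> 3) \<longrightarrow> gamma_x E x0 < nr / (2 * nr - 3)"
    using upper_constr[OF assms(1,2) vw] unfolding nr_def n_def by blast
  have fne: "feasible V \<noteq> {}" using x0(1) by blast
  have LBgen: "nr / B \<le> gamma_x E x" if x: "x \<in> feasible V" and B: "0 < B"
      "\<And>u. u \<in> V \<Longrightarrow> real (\<Sum>w\<in>V. gd E u w) \<le> B" for x B
  proof -
    obtain u where u: "u \<in> V" "real (card V) \<le> gamma_x E x * real (\<Sum>w\<in>V. gd E u w)"
      using L1[OF T(1,2,4) x] by blast
    have u2: "nr \<le> gamma_x E x * real (\<Sum>w\<in>V. gd E u w)" using u(2) by (simp add: nr_def n_def)
    have "0 < nr" using n3 by simp
    moreover have "0 \<le> real (\<Sum>w\<in>V. gd E u w)" by (rule of_nat_0_le_iff)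
    ultimately show ?thesis using lb_aux[OF _ u2 _ B(2)[OF u(1)] B(1)] by blast
  qed
  have LB: "2 / (nr - 1) \<le> gamma_x E x" if x: "x \<in> feasible V" for x
  proof -
    have "nr / (nr * (nr - 1) / 2) \<le> gamma_x E x"
    proof (rule LBgen[OF x])
      show "0 < nr * (nr - 1) / 2" using n3 by simp
      fix u assume u: "u \<in> V"
      have "2 * (\<Sum>w\<in>V. gd E u w) \<le> n * (n - 1)" using dist_sum_bound[OF T(1,2) u] by (simp add: n_def)
      then have "real (2 * (\<Sum>w\<in>V. gd E u w)) \<le> real (n * (n - 1))" by (rule of_nat_mono)
      moreover have "real (n * (n - 1)) = nr * (nr - 1)" using n3 by (simp add: nr_def of_nat_diff)
      ultimately show "real (\<Sum>w\<in>V. gd E u w) \<le> nr * (nr - 1) / 2" by simp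
    qed
    moreover have "nr / (nr * (nr - 1) / 2) = 2 / (nr - 1)" using n3 by (simp add: field_simps)
    ultimately show ?thesis by simp
  qed
  have bdd: "bdd_below (gamma_x E ` feasible V)" by (rule bdd_belowI2[of _ "2 / (nr - 1)"]) (rule LB)
  have gle: "gamma V E \<le> gamma_x E x" if "x \<in> feasible V" for x
    unfolding gamma_def by (rule cINF_lower[OF bdd that])
  have gge: "L \<le> gamma V E" if "\<And>x. x \<in> feasible V \<Longrightarrow> L \<le> gamma_x E x" for L
    unfolding gamma_def by (rule cINF_greatest[OF fne that])
  have P1: "2 / (nr - 1) \<le> gamma V E" by (rule gge) (rule LB)
  have P2: "gamma V E \<le> nr / (2 * nr - 3)" using gle[OF x0(1)] x0(2) by linarith
  have P3: "gamma V E = 2 / (nr - 1) \<longleftrightarrow> graph_iso V E {0..<n} (path_edges n)"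
  proof
    assume iso: "graph_iso V E {0..<n} (path_edges n)"
    have "\<exists>x\<in>feasible V. gamma_x E x \<le> 2 / (real (card V) - 1)"
      using path_constr[OF T(1,2) assms(2)] iso unfolding n_def by blast
    then obtain x1 where x1: "x1 \<in> feasible V" "gamma_x E x1 \<le> 2 / (nr - 1)"
      unfolding n_def nr_def by blast
    have "gamma V E \<le> 2 / (nr - 1)" using gle[OF x1(1)] x1(2) by linarith
    then show "gamma V E = 2 / (nr - 1)" using P1 by linarith
  next
    assume g: "gamma V E = 2 / (nr - 1)"
    show "graph_iso V E {0..<n} (path_edges n)"
    proof (rule ccontr)
      assume np: "\<not> graph_iso V E {0..<n} (path_edges n)"
      have B: "real (\<Sum>w\<in>V. gd E u w) \<le> (nr * (nr - 1) - 1) / 2" if u: "u \<in> V" for u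
      proof -
        have "2 * (\<Sum>w\<in>V. gd E u w) \<noteq> n * (n - 1)"
          using dist_sum_bound[OF T(1,2) u] path_from_bij[OF T(1,2) u] np by (auto simp: n_def)
        then have "2 * (\<Sum>w\<in>V. gd E u w) + 1 \<le> n * (n - 1)" using dist_sum_bound[OF T(1,2) u] by (simp add: n_def)
        then have "real (2 * (\<Sum>w\<in>V. gd E u w) + 1) \<le> real (n * (n - 1))" by (rule of_nat_mono)
        moreover have "real (n * (n - 1)) = nr * (nr - 1)" using n3 by (simp add: nr_def of_nat_diff)
        ultimately show ?thesis by simp
      qed
      have Bpos: "0 < (nr * (nr - 1) - 1) / 2"
      proof -
        have "nr * (nr - 1) \<ge> 3 * 2" using n3 by (intro mult_mono) auto
        then show ?thesis by simp
      qed
      have "nr / ((nr * (nr - 1) - 1) / 2) \<le> gamma V E"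
      proof (rule gge)
        fix x assume "x \<in> feasible V"
        then show "nr / ((nr * (nr - 1) - 1) / 2) \<le> gamma_x E x" using LBgen Bpos B by blast
      qed
      moreover have "2 / (nr - 1) < nr / ((nr * (nr - 1) - 1) / 2)"
      proof -
        have "nr * (nr - 1) - 1 > 0" using Bpos by simp
        moreover have "nr - 1 > 0" using n3 by simp
        ultimately show ?thesis by (simp add: field_simps)
      qed
      ultimately show False using g by linarith
    qed
  qed
  have P4: "gamma V E = nr / (2 * nr - 3) \<longleftrightarrow> graph_iso V E {0..<n} (star_edges n)"
  proof
    assume iso: "graph_iso V E {0..<n} (star_edges n)"
    obtain f where bij: "bij_betw f V {0..<n}" and fe: "\<forall>a\<in>V. \<forall>b\<in>V. {a, b} \<in> E \<longleftrightarrow> {f a, f b} \<in> star_edges n"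
      using iso unfolding graph_iso_def by blast
    obtain c where c: "c \<in> V" "f c = 0"
    proof -
      have "0 \<in> f ` V" using bij assms(2) by (simp add: bij_betw_def n_def)
      then show ?thesis using that by (metis imageE)
    qed
    have cen: "\<forall>z\<in>V. z \<noteq> c \<longrightarrow> {c, z} \<in> E"
    proof (intro ballI impI)
      fix z assume z: "z \<in> V" "z \<noteq> c"
      have "inj_on f V" using bij by (simp add: bij_betw_def)
      then have "f z \<noteq> f c" using inj_on_eq_iff[OF _ z(1) c(1)] z(2) by simp
      moreover have "f z < n" using bij z(1) by (auto dest: bij_betw_apply)
      ultimately have "{f c, f z} \<in> star_edges n" using c(2) unfolding star_edges_def by auto
      then show "{c, z} \<in> E" using fe c(1) z(1) by blast
    qed
    have "nr / (2 * nr - 3) \<le> gamma V E"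
    proof (rule gge, rule LBgen)
      fix x assume "x \<in> feasible V" then show "x \<in> feasible V" .
      show "0 < 2 * nr - 3" using n3 by simp
      fix u assume u: "u \<in> V"
      have "(\<Sum>w\<in>V. gd E u w) \<le> 2 * n - 3" using star_D_bound[OF T(1,2) c(1) cen u assms(2)] by (simp add: n_def)
      then have "real (\<Sum>w\<in>V. gd E u w) \<le> real (2 * n - 3)" by (rule of_nat_mono)
      moreover have "real (2 * n - 3) = 2 * nr - 3" using n3 by (simp add: nr_def of_nat_diff)
      ultimately show "real (\<Sum>w\<in>V. gd E u w) \<le> 2 * nr - 3" by simp
    qed
    then show "gamma V E = nr / (2 * nr - 3)" using P2 by linarith
  next
    assume g: "gamma V E = nr / (2 * nr - 3)"
    show "graph_iso V E {0..<n} (star_edges n)"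
    proof (rule ccontr)
      assume ns: "\<not> graph_iso V E {0..<n} (star_edges n)"
      have "\<exists>z\<in>V. gd E v z \<ge> 3"
      proof (rule ccontr)
        assume "\<not> (\<exists>z\<in>V. gd E v z \<ge> 3)"
        then have le2: "\<forall>z\<in>V. gd E v z \<le> 2" by auto
        have "\<forall>z\<in>V. z \<noteq> w \<longrightarrow> {w, z} \<in> E"
        proof (intro ballI impI)
          fix z assume z: "z \<in> V" "z \<noteq> w"
          show "{w, z} \<in> E"
          proof (cases "z = v")
            case True
            then show ?thesis using vw(3) by (simp add: insert_commute)
          next
            case False
            have "gd E v z \<noteq> 0" using gd_zero[OF T(2) vw(1) z(1)] False by auto
            moreover have "gd E v z \<noteq> 1" using gd_one[OF T(1,2) vw(1) z(1)] vw(4) z by auto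
            moreover have "gd E v z \<le> 2" using le2 z(1) by blast
            ultimately have "gd E v z = Suc 1" by linarith
            then obtain c where c: "c \<in> V" "{c, z} \<in> E" "gd E v c = 1" using gd_pred[OF T(1,2) vw(1) z(1)] by blast
            have "{v, c} \<in> E" by (rule gd_one[OF T(1,2) vw(1) c(1) c(3)])
            then have "c = w" using vw(4) c(1) by blast
            then show ?thesis using c(2) by simp
          qed
        qed
        then show False using star_iso[OF assms(1) vw(2)] ns by (simp add: n_def)
      qed
      then have "gamma_x E x0 < nr / (2 * nr - 3)" using x0(3) by blast
      then show False using gle[OF x0(1)] g by linarith
    qed
  qed
  show ?thesis using P1 P2 P3 P4 unfolding nr_def n_def by (intro conjI) assumption+
qed


theorem theorem4p8:
  fixes V :: "'a set" and E :: "'a set set"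
  assumes "is_tree V E" and "card V \<ge> 3"
  shows "2 / (real (card V) - 1) \<le> gamma V E \<and>
         gamma V E \<le> real (card V) / (2 * real (card V) - 3) \<and>
         (gamma V E = 2 / (real (card V) - 1) \<longleftrightarrow>
            graph_iso V E {0..<card V} (path_edges (card V))) \<and>
         (gamma V E = real (card V) / (2 * real (card V) - 3) \<longleftrightarrow>
            graph_iso V E {0..<card V} (star_edges (card V)))"
  using main_thm[OF assms] .

end
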